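(* Let $(M,d)$ be a metric space and let $P\subseteq M$ be a finite set, enumerated as $p_0,\dots,p_n$ by a farthest point sampling with insertion radii $\lambda_0,\dots,\lambda_n$: that is, $p_0\in P$ is arbitrary, $\lambda_0=\infty$, and for each $0<k\le n$ the point $p_k\in P$ is of maximal distance to $\{p_0,\dots,p_{k-1}\}$, and this distance is $\lambda_k$. Let $\varepsilon>0$ and let $\varphi\colon\{0,\dots,n\}\to\{0,\dots,n\}$ be a function with $\varphi(0)=0$, $\varphi(k)<k$ and \[ d(p_k,p_{\varphi(k)})+(\varepsilon+1)\lambda_k/\varepsilon\le(\varepsilon+1)\lambda_{\varphi(k)}/\varepsilon \] for $k=1,\dots,n$. Let $\check{\mathcal C}$ be the relative Čech complex of $P$ in $M$, the filtered simplicial complex whose level $t\in[0,\infty]$ consists of the finite $\sigma\subseteq P$ for which there is $w\in M$ with $d(p,w)<t$ for all $p\in\sigma$. Let $S$ (the Sparse Dowker Nerve) be the filtered subcomplex of $\check{\mathcal C}$ whose level $t$ consists of the subsets $\sigma\subseteq P$ for which there exists $w\in M$ with \[ d(p_k,w)<\min\{t,(\varepsilon+1)\lambda_k/\varepsilon,(\varepsilon+1)\lambda_{\varphi(l)}/\varepsilon\} \] for all $k,l$ with $p_k,p_l\in\sigma$. Then $S$ is multiplicatively $(1,1+\varepsilon)$-interleaved with $\check{\mathcal C}$; explicitly, there are maps $f_t\colon|\check{\mathcal C}_t|\to|S_{(1+\varepsilon)t}|$ such that, writing $g_t\colon S_t\to\check{\mathcal C}_t$ for the inclusions, $f_t\circ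 g_t$ is homotopic to the inclusion $|S_t|\to|S_{(1+\varepsilon)t}|$ and $g_{(1+\varepsilon)t}\circ f_t$ is homotopic to the inclusion $|\check{\mathcal C}_t|\to|\check{\mathcal C}_{(1+\varepsilon)t}|$.
   Context: $|K|$ denotes the geometric realization of a simplicial complex $K$; maps between geometric realizations are continuous maps. Conventions: $\infty\cdot c=\infty$ for $c>0$ and $\min$ includes possibly infinite values. *)

theory Defs
  imports "HOL-Analysis.Analysis"
begin

text \<open>Geometric realization of a simplicial complex K (a set of finite vertex sets):
  barycentric-coordinate functions, as a subspace of the product topology on
  vertex-type to real. For complexes on a finite vertex set this is the usual
  realization.\<close>
definition geom_real :: "'a set set \<Rightarrow> ('a \<Rightarrow> real) set" where
  "geom_real K = {x. (\<forall>v. 0 \<le> x v) \<and>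
     (\<exists>\<sigma>\<in>K. finite \<sigma> \<and> {v. x v \<noteq> 0} \<subseteq> \<sigma> \<and> sum x \<sigma> = 1)}"

definition cech_level :: "'m set \<Rightarrow> ('m \<Rightarrow> 'm \<Rightarrow> real) \<Rightarrow> 'm set \<Rightarrow> ereal \<Rightarrow> 'm set set" where
  "cech_level M d P t = {\<sigma>. \<sigma> \<subseteq> P \<and> finite \<sigma> \<and> (\<exists>w\<in>M. \<forall>q\<in>\<sigma>. ereal (d q w) < t)}"

definition sparse_level :: "'m set \<Rightarrow> ('m \<Rightarrow> 'm \<Rightarrow> real) \<Rightarrow> nat \<Rightarrow> (nat \<Rightarrow> 'm) \<Rightarrow>
    (nat \<Rightarrow> ereal) \<Rightarrow> (nat \<Rightarrow> nat) \<Rightarrow> real \<Rightarrow> ereal \<Rightarrow> 'm set set" where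
  "sparse_level M d n p lam phi eps t = {\<sigma>. \<sigma> \<subseteq> p ` {0..n} \<and>
     (\<exists>w\<in>M. \<forall>k l. k \<le> n \<and> l \<le> n \<and> p k \<in> \<sigma> \<and> p l \<in> \<sigma> \<longrightarrow>
        ereal (d (p k) w) < min t (min (ereal ((eps + 1) / eps) * lam k)
                                       (ereal ((eps + 1) / eps) * lam (phi l))))}"

definition farthest_point_sampling ::
    "('m \<Rightarrow> 'm \<Rightarrow> real) \<Rightarrow> 'm set \<Rightarrow> nat \<Rightarrow> (nat \<Rightarrow> 'm) \<Rightarrow> (nat \<Rightarrow> ereal) \<Rightarrow> bool" where
  "farthest_point_sampling d P n p lam \<longleftrightarrow>
     bij_betw p {0..n} P \<and> lam 0 = \<infinity> \<and>
     (\<forall>k\<in>{1..n}.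
        lam k = ereal (Min ((\<lambda>i. d (p k) (p i)) ` {..<k})) \<and>
        (\<forall>q\<in>P. Min ((\<lambda>i. d q (p i)) ` {..<k}) \<le> Min ((\<lambda>i. d (p k) (p i)) ` {..<k})))"

end

theory Submission
  imports Defs
begin


lemma hom_linear_fun:
  fixes f g :: "'a::topological_space \<Rightarrow> 'b \<Rightarrow> real"
  assumes cf: "continuous_on S f" and cg: "continuous_on S g"
    and sub: "\<And>x s. x \<in> S \<Longrightarrow> s \<in> {0..1} \<Longrightarrow> (\<lambda>v. (1 - s) * f x v + s * g x v) \<in> T"
  shows "homotopic_with_canon (\<lambda>_. True) S T f g"
  unfolding homotopic_with_def
proof (intro exI conjI allI ballI)
  let ?h = "\<lambda>y::real \<times> 'a. \<lambda>v. (1 - fst y) * f (snd y) v + fst y * g (snd y) v"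
  have "continuous_on ({0..1} \<times> S) ?h"
  proof (intro continuous_on_coordinatewise_then_product)
    fix v
    have a: "continuous_on ({0..1} \<times> S) (\<lambda>y::real\<times>'a. f (snd y) v)"
      by (rule continuous_on_compose2[OF continuous_on_product_then_coordinatewise[OF cf] continuous_on_snd]) auto
    have b: "continuous_on ({0..1} \<times> S) (\<lambda>y::real\<times>'a. g (snd y) v)"
      by (rule continuous_on_compose2[OF continuous_on_product_then_coordinatewise[OF cg] continuous_on_snd]) auto
    show "continuous_on ({0..1} \<times> S) (\<lambda>y. ?h y v)"
      by (intro continuous_intros a b)
  qed
  moreover have "?h ` ({0..1} \<times> S) \<subseteq> T" using sub by auto
  ultimately show "continuous_map (prod_topology (top_of_set {0..1}) (top_of_set S)) (top_of_set T) ?h"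
    by (auto simp: Pi_iff image_subset_iff)
qed auto



definition push :: "'m set \<Rightarrow> ('m \<Rightarrow> 'm) \<Rightarrow> ('m \<Rightarrow> real) \<Rightarrow> 'm \<Rightarrow> real" where
  "push V G x = (\<lambda>v. \<Sum>u\<in>V. if G u = v then x u else 0)"

lemma push_cont: "finite V \<Longrightarrow> continuous_on S (push V G)"
  unfolding push_def
proof (intro continuous_on_coordinatewise_then_product continuous_on_sum)
  fix v u
  show "continuous_on S (\<lambda>x. if G u = v then x u else 0)"
    by (cases "G u = v") (auto intro: continuous_on_subset[OF continuous_on_product_coordinates])
qed

lemma push_eq:
  assumes "finite V" "\<sigma> \<subseteq> V" "{v. x v \<noteq> 0} \<subseteq> \<sigma>"
  shows "push V G x v = sum x {u\<in>\<sigma>. G u = v}"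
proof -
  have "push V G x v = (\<Sum>u\<in>V. if u \<in> {u\<in>\<sigma>. G u = v} then x u else 0)"
    unfolding push_def using assms(3) by (intro sum.cong) auto
  also have "\<dots> = sum x {u\<in>\<sigma>. G u = v}"
    using assms by (subst sum.inter_restrict[symmetric]) (auto intro: sum.cong)
  finally show ?thesis .
qed

lemma push_props:
  assumes "finite V" "\<sigma> \<subseteq> V" "{v. x v \<noteq> 0} \<subseteq> \<sigma>" "\<forall>v. 0 \<le> x v"
  shows "\<forall>v. 0 \<le> push V G x v" "{v. push V G x v \<noteq> 0} \<subseteq> G ` \<sigma>"
    "sum (push V G x) (G ` \<sigma>) = sum x \<sigma>"
proof -
  have fs: "finite \<sigma>" using assms finite_subset by blast
  show "\<forall>v. 0 \<le> push V G x v" using assms by (auto simp: push_eq intro: sum_nonneg)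
  show "{v. push V G x v \<noteq> 0} \<subseteq> G ` \<sigma>"
  proof
    fix v assume "v \<in> {v. push V G x v \<noteq> 0}"
    then have "sum x {u\<in>\<sigma>. G u = v} \<noteq> 0" using assms by (simp add: push_eq)
    then obtain u where "u \<in> \<sigma>" "G u = v" by (metis (mono_tags, lifting) empty_Collect_eq sum.empty)
    then show "v \<in> G ` \<sigma>" by auto
  qed
  show "sum (push V G x) (G ` \<sigma>) = sum x \<sigma>"
    using assms fs by (simp add: push_eq sum.image_gen[of \<sigma> x G])
qed

lemma push_id:
  assumes "finite V" "\<sigma> \<subseteq> V" "{v. x v \<noteq> 0} \<subseteq> \<sigma>"
  shows "push V (\<lambda>u. u) x = x"
proof
  fix v
  show "push V (\<lambda>u. u) x v = x v"
    unfolding push_def using assms by (cases "v \<in> V") auto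
qed

lemma geom_realE:
  assumes "x \<in> geom_real K"
  obtains \<sigma> where "\<sigma> \<in> K" "finite \<sigma>" "{v. x v \<noteq> 0} \<subseteq> \<sigma>" "sum x \<sigma> = 1" "\<forall>v. 0 \<le> x v"
  using assms unfolding geom_real_def by blast

lemma contig:
  assumes V: "finite V" and KV: "\<forall>\<sigma>\<in>K. \<sigma> \<subseteq> V"
    and L: "\<forall>\<sigma>\<in>K. G ` \<sigma> \<union> G' ` \<sigma> \<in> L"
  shows "homotopic_with_canon (\<lambda>_. True) (geom_real K) (geom_real L) (push V G) (push V G')"
proof (rule hom_linear_fun[OF push_cont[OF V] push_cont[OF V]])
  fix x s assume x: "x \<in> geom_real K" and s: "s \<in> {0..(1::real)}"
  obtain \<sigma> where \<sigma>: "\<sigma> \<in> K" "finite \<sigma>" "{v. x v \<noteq> 0} \<subseteq> \<sigma>" "sum x \<sigma> = 1" "\<forall>v. 0 \<le> x v"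
    using geom_realE[OF x] by blast
  have sV: "\<sigma> \<subseteq> V" using KV \<sigma> by auto
  define \<rho> where "\<rho> = G ` \<sigma> \<union> G' ` \<sigma>"
  have \<rho>L: "\<rho> \<in> L" using L \<sigma> \<rho>_def by auto
  have f\<rho>: "finite \<rho>" using \<sigma> \<rho>_def by auto
  note A = push_props[OF V sV \<sigma>(3) \<sigma>(5), of G] and B = push_props[OF V sV \<sigma>(3) \<sigma>(5), of G']
  have sA: "sum (push V G x) \<rho> = 1"
    using A \<sigma> f\<rho> by (subst sum.mono_neutral_right[of \<rho> "G ` \<sigma>"]) (auto simp: \<rho>_def)
  have sB: "sum (push V G' x) \<rho> = 1"
    using B \<sigma> f\<rho> by (subst sum.mono_neutral_right[of \<rho> "G' ` \<sigma>"]) (auto simp: \<rho>_def)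
  let ?z = "\<lambda>v. (1 - s) * push V G x v + s * push V G' x v"
  have "\<forall>v. 0 \<le> ?z v" using A B s by auto
  moreover have "{v. ?z v \<noteq> 0} \<subseteq> \<rho>"
  proof
    fix v assume "v \<in> {v. ?z v \<noteq> 0}"
    then have "push V G x v \<noteq> 0 \<or> push V G' x v \<noteq> 0" by auto
    then show "v \<in> \<rho>" using A(2) B(2) unfolding \<rho>_def by blast
  qed
  moreover have "sum ?z \<rho> = 1"
    by (simp add: sum.distrib sum_distrib_left[symmetric] sA sB)
  ultimately show "?z \<in> geom_real L" unfolding geom_real_def using \<rho>L f\<rho> by blast
qed

lemma push_into:
  assumes V: "finite V" and KV: "\<forall>\<sigma>\<in>K. \<sigma> \<subseteq> V"
    and L: "\<forall>\<sigma>\<in>K. G ` \<sigma> \<in> L"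
  shows "push V G ` geom_real K \<subseteq> geom_real L"
  using homotopic_with_imp_subset1[OF contig[OF V KV, of G G L]] L by auto

lemma push_id_eq:
  assumes V: "finite V" and KV: "\<forall>\<sigma>\<in>K. \<sigma> \<subseteq> V" and x: "x \<in> geom_real K"
  shows "push V (\<lambda>u. u) x = x"
proof -
  obtain \<sigma> where \<sigma>: "\<sigma> \<in> K" "finite \<sigma>" "{v. x v \<noteq> 0} \<subseteq> \<sigma>" "sum x \<sigma> = 1" "\<forall>v. 0 \<le> x v"
    using geom_realE[OF x] by blast
  show ?thesis using push_id[OF V _ \<sigma>(3)] KV \<sigma> by auto
qed



definition stp :: "(nat \<Rightarrow> ereal) \<Rightarrow> (nat \<Rightarrow> nat) \<Rightarrow> ereal \<Rightarrow> nat \<Rightarrow> nat \<Rightarrow> nat" where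
  "stp C phi T v j = (if j = v \<and> C (phi v) < T then phi v else j)"

definition gfun :: "(nat \<Rightarrow> ereal) \<Rightarrow> (nat \<Rightarrow> nat) \<Rightarrow> ereal \<Rightarrow> nat list \<Rightarrow> nat \<Rightarrow> nat" where
  "gfun C phi T xs = foldl (\<lambda>h v. stp C phi T v \<circ> h) (\<lambda>j. j) xs"

lemma gfun_snoc: "gfun C phi T (xs @ [v]) = stp C phi T v \<circ> gfun C phi T xs"
  by (simp add: gfun_def)

lemma gfun_Nil: "gfun C phi T [] = (\<lambda>j. j)"
  by (simp add: gfun_def)

definition cinv :: "(nat \<Rightarrow> ereal) \<Rightarrow> (nat \<Rightarrow> nat) \<Rightarrow> ereal \<Rightarrow> nat \<Rightarrow> (nat \<Rightarrow> ereal) \<Rightarrow> nat set \<Rightarrow> nat set \<Rightarrow> bool" where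
  "cinv C phi T n D X \<tau> \<longleftrightarrow> \<tau> \<subseteq> {..n} \<and> (\<forall>a\<in>\<tau>. \<forall>b\<in>\<tau>. D a < min T (min (C a) (C (phi b))))
     \<and> (\<forall>a\<in>\<tau>. a \<in> X \<longrightarrow> T \<le> C (phi a))"

lemma sorted_exists:
  fixes key :: "'a \<Rightarrow> nat"
  assumes "finite A" "inj_on key A"
  shows "\<exists>L. set L = A \<and> sorted_wrt (\<lambda>a b. key a < key b) L"
proof -
  let ?S = "sorted_list_of_set (key ` A)"
  let ?L = "map (inv_into A key) ?S"
  have fin: "finite (key ` A)" using assms by auto
  have "set ?L = A" using fin assms(2) by (simp add: inv_into_image_cancel)
  moreover have "sorted_wrt (<) ?S" using strict_sorted_list_of_set by blast
  then have "sorted_wrt (\<lambda>x y. key (inv_into A key x) < key (inv_into A key y)) ?S"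
    by (rule sorted_wrt_mono_rel[rotated]) (use fin in \<open>auto simp: f_inv_into_f\<close>)
  then have "sorted_wrt (\<lambda>a b. key a < key b) ?L" by (simp add: sorted_wrt_map)
  ultimately show ?thesis by blast
qed

definition rk :: "(nat \<Rightarrow> ereal) \<Rightarrow> (nat \<Rightarrow> nat) \<Rightarrow> nat \<Rightarrow> nat \<Rightarrow> nat" where "rk C phi n b = card {a. a \<le> n \<and> C (phi a) < C (phi b)}"
definition key :: "(nat \<Rightarrow> ereal) \<Rightarrow> (nat \<Rightarrow> nat) \<Rightarrow> nat \<Rightarrow> nat \<Rightarrow> nat" where "key C phi n b = rk C phi n b * (n + 1) + (n - b)"

lemma key_inj: "inj_on (key C phi n) {..n}"
proof (rule inj_onI)
  fix a b assume "a \<in> {..n}" "b \<in> {..n}" "key C phi n a = key C phi n b"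
  moreover have "key C phi n a mod (n+1) = n - a" "key C phi n b mod (n+1) = n - b"
    unfolding key_def by (simp del: add_Suc_right)+
  ultimately have "n - a = n - b" by metis
  then show "a = b" using \<open>a \<in> {..n}\<close> \<open>b \<in> {..n}\<close> by auto
qed

locale chainsys =
  fixes C :: "nat \<Rightarrow> ereal" and phi :: "nat \<Rightarrow> nat" and n :: nat and T :: ereal and D :: "nat \<Rightarrow> ereal"
  assumes Cmono: "\<And>k. k \<le> n \<Longrightarrow> C k \<le> C (phi k)"
    and phile: "\<And>k. k \<le> n \<Longrightarrow> phi k \<le> n"
    and philt: "\<And>k. 1 \<le> k \<Longrightarrow> k \<le> n \<Longrightarrow> phi k < k"
    and phi0: "phi 0 = 0" and C0: "C 0 = \<infinity>"
    and dom: "\<And>k. k \<le> n \<Longrightarrow> D k < C k \<Longrightarrow> D (phi k) < C (phi k)"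
begin

lemma rk_less: assumes "C (phi a) < C (phi b)" "a \<le> n" shows "rk C phi n a < rk C phi n b"
  unfolding rk_def
  by (rule psubset_card_mono) (use assms in \<open>auto dest: order.strict_trans1\<close>)

lemma rk_mono: assumes "C (phi a) \<le> C (phi b)" shows "rk C phi n a \<le> rk C phi n b"
  unfolding rk_def
  by (rule card_mono) (use assms in \<open>auto dest: order.strict_trans2\<close>)

lemma K1: assumes "1 \<le> v" "v \<le> n" shows "\<not> key C phi n (phi v) < key C phi n v"
proof -
  have "phi v < v" "phi v \<le> n" using philt phile assms by auto
  then have "rk C phi n v \<le> rk C phi n (phi v)" using rk_mono Cmono by blast
  then have "rk C phi n v * (n+1) \<le> rk C phi n (phi v) * (n+1)" by (rule mult_right_mono) simp
  then show ?thesis unfolding key_def using \<open>phi v < v\<close> assms by linarith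
qed

lemma K2: assumes "b \<le> n" "\<not> key C phi n b < key C phi n v" shows "C (phi v) \<le> C (phi b)"
proof (rule ccontr)
  assume "\<not> C (phi v) \<le> C (phi b)"
  then have "rk C phi n b < rk C phi n v" using rk_less assms by auto
  then have "(rk C phi n b + 1) * (n+1) \<le> rk C phi n v * (n+1)" by (intro mult_right_mono) auto
  then show False using assms unfolding key_def by (auto simp: algebra_simps)
qed

lemma step:
  assumes I: "cinv C phi T n D X \<tau>" and v: "v \<le> n"
    and ord: "\<And>b. b \<le> n \<Longrightarrow> b \<in> X \<longleftrightarrow> key C phi n b < key C phi n v"
  shows "cinv C phi T n D (insert v X) (stp C phi T v ` \<tau>) \<and> cinv C phi T n D {} (\<tau> \<union> stp C phi T v ` \<tau>)"
proof -
  have tn: "\<tau> \<subseteq> {..n}" and I2: "\<And>a b. a\<in>\<tau> \<Longrightarrow> b\<in>\<tau> \<Longrightarrow> D a < min T (min (C a) (C (phi b)))"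
    and I3: "\<And>a. a\<in>\<tau> \<Longrightarrow> a \<in> X \<Longrightarrow> T \<le> C (phi a)"
    using I unfolding cinv_def by blast+
  have vX: "v \<notin> X" using ord[OF v] by simp
  show "cinv C phi T n D (insert v X) (stp C phi T v ` \<tau>) \<and> cinv C phi T n D {} (\<tau> \<union> stp C phi T v ` \<tau>)"
  proof (cases "v \<in> \<tau> \<and> C (phi v) < T")
    case False
    then have eq: "stp C phi T v ` \<tau> = \<tau>" by (auto simp: stp_def image_iff)
    have "cinv C phi T n D (insert v X) \<tau>"
      unfolding cinv_def
    proof (intro conjI ballI impI)
      fix a assume "a \<in> \<tau>" "a \<in> insert v X"
      then show "T \<le> C (phi a)" using False I3 by (cases "a = v") (auto simp: not_less)
    qed (use tn I2 in auto)
    moreover have "cinv C phi T n D {} \<tau>" using tn I2 unfolding cinv_def by auto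
    ultimately show ?thesis unfolding eq by simp
  next
    case True
    then have v\<tau>: "v \<in> \<tau>" and Cv: "C (phi v) < T" by auto
    have v0: "v \<noteq> 0"
    proof
      assume "v = 0" then show False using Cv C0 phi0 by simp
    qed
    have pv: "phi v < v" using philt[of v] v v0 by auto
    have pvn: "phi v \<le> n" using phile v by auto
    have pvX: "phi v \<notin> X"
    proof
      assume "phi v \<in> X"
      then have "key C phi n (phi v) < key C phi n v" using ord[OF pvn] by simp
      then show False using K1[of v] v v0 by auto
    qed
    have img: "stp C phi T v ` \<tau> \<subseteq> insert (phi v) (\<tau> - {v})"
      using Cv by (auto simp: stp_def)
    have Dpv: "D (phi v) < C (phi v)" using dom[OF v] I2[OF v\<tau> v\<tau>] by auto
    have cmp: "C (phi v) \<le> C (phi b)" if "b \<in> \<tau>" for b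
    proof (cases "b \<in> X")
      case True then show ?thesis using I3[OF that] Cv by auto
    next
      case False
      then have "\<not> key C phi n b < key C phi n v" using ord[of b] tn that by auto
      then show ?thesis using K2 tn that by auto
    qed
    have big: "\<forall>a\<in>insert (phi v) \<tau>. \<forall>b\<in>insert (phi v) \<tau>. D a < min T (min (C a) (C (phi b)))"
    proof (intro ballI)
      fix a b assume a: "a \<in> insert (phi v) \<tau>" and b: "b \<in> insert (phi v) \<tau>"
      have Cpp: "C (phi v) \<le> C (phi (phi v))" using Cmono[OF pvn] .
      show "D a < min T (min (C a) (C (phi b)))"
      proof (cases "a = phi v")
        case True
        have "D a < C (phi b)"
        proof (cases "b = phi v")
          case True then show ?thesis using \<open>a = phi v\<close> Dpv Cpp by auto
        next
          case False then have "b \<in> \<tau>" using b by auto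
          then show ?thesis using cmp \<open>a = phi v\<close> Dpv by (meson less_le_trans)
        qed
        then show ?thesis using True Dpv Cv by auto
      next
        case False then have a\<tau>: "a \<in> \<tau>" using a by auto
        show ?thesis
        proof (cases "b = phi v")
          case True
          have "D a < C (phi v)" using I2[OF a\<tau> v\<tau>] by auto
          then show ?thesis using I2[OF a\<tau> a\<tau>] Cpp True by auto
        next
          case False then show ?thesis using I2[OF a\<tau>] b by auto
        qed
      qed
    qed
    have s1: "\<tau> \<union> stp C phi T v ` \<tau> \<subseteq> insert (phi v) \<tau>" using img by auto
    have s2: "insert (phi v) \<tau> \<subseteq> {..n}" using tn pvn by auto
    have "cinv C phi T n D {} (\<tau> \<union> stp C phi T v ` \<tau>)"
      unfolding cinv_def using s1 s2 big by blast
    moreover have "cinv C phi T n D (insert v X) (stp C phi T v ` \<tau>)"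
      unfolding cinv_def
    proof (intro conjI ballI impI)
      show "stp C phi T v ` \<tau> \<subseteq> {..n}" using img s2 by auto
    next
      fix a b assume "a \<in> stp C phi T v ` \<tau>" "b \<in> stp C phi T v ` \<tau>"
      then show "D a < min T (min (C a) (C (phi b)))" using big img by blast
    next
      fix a assume a: "a \<in> stp C phi T v ` \<tau>" and aX: "a \<in> insert v X"
      show "T \<le> C (phi a)"
      proof (cases "a = phi v")
        case True then show ?thesis using aX pvX pv by auto
      next
        case False then have "a \<in> \<tau> - {v}" using img a by auto
        then show ?thesis using I3 aX by auto
      qed
    qed
    ultimately show ?thesis by blast
  qed
qed

lemma chain_inv:
  assumes L: "set L = {..n}" "sorted_wrt (\<lambda>a b. key C phi n a < key C phi n b) L"
    and I0: "cinv C phi T n D {} J"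
  shows "L = xs @ ys \<Longrightarrow> cinv C phi T n D (set xs) (gfun C phi T xs ` J) \<and>
     (\<forall>xs' v. xs = xs' @ [v] \<longrightarrow> cinv C phi T n D {} (gfun C phi T xs' ` J \<union> gfun C phi T xs ` J))"
proof (induction xs arbitrary: ys rule: rev_induct)
  case Nil then show ?case using I0 by (simp add: gfun_Nil)
next
  case (snoc v xs)
  have IH: "cinv C phi T n D (set xs) (gfun C phi T xs ` J)" using snoc by auto
  have v: "v \<le> n" using L(1) snoc.prems by auto
  have ord: "b \<in> set xs \<longleftrightarrow> key C phi n b < key C phi n v" if "b \<le> n" for b
  proof
    assume "b \<in> set xs" then show "key C phi n b < key C phi n v"
      using L(2) snoc.prems by (auto simp: sorted_wrt_append)
  next
    assume kb: "key C phi n b < key C phi n v"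
    have "b \<in> set L" using L(1) that by auto
    then have "b \<in> set xs \<or> b = v \<or> b \<in> set ys" using snoc.prems by auto
    moreover have "b \<noteq> v" using kb by auto
    moreover have "b \<notin> set ys"
    proof
      assume "b \<in> set ys" then have "key C phi n v < key C phi n b"
        using L(2) snoc.prems by (auto simp: sorted_wrt_append)
      then show False using kb by auto
    qed
    ultimately show "b \<in> set xs" by blast
  qed
  note S = step[OF IH v ord]
  have e: "gfun C phi T (xs @ [v]) ` J = stp C phi T v ` (gfun C phi T xs ` J)"
    by (simp add: gfun_snoc image_comp)
  show ?case using S unfolding e by auto
qed

end


definition Cf :: "real \<Rightarrow> (nat \<Rightarrow> ereal) \<Rightarrow> nat \<Rightarrow> ereal" where
  "Cf eps lam k = ereal ((eps + 1) / eps) * lam k"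

lemma push_cong: "(\<And>u. u \<in> V \<Longrightarrow> G u = G' u) \<Longrightarrow> push V G = push V G'"
  unfolding push_def by (intro ext sum.cong) auto

context
  fixes M :: "'m set" and d :: "'m \<Rightarrow> 'm \<Rightarrow> real" and P :: "'m set"
    and n :: nat and p :: "nat \<Rightarrow> 'm" and lam :: "nat \<Rightarrow> ereal"
    and eps :: real and phi :: "nat \<Rightarrow> nat"
  assumes ms: "Metric_space M d"
    and PM: "P \<subseteq> M" and fP: "finite P"
    and fps: "farthest_point_sampling d P n p lam"
    and eps: "eps > 0"
    and phi0: "phi 0 = 0"
    and ch: "\<forall>k\<in>{1..n}. phi k < k \<and>
           ereal (d (p k) (p (phi k))) + ereal ((eps + 1) / eps) * lam k
             \<le> ereal ((eps + 1) / eps) * lam (phi k)"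
begin

lemma bij: "bij_betw p {..n} P" using fps unfolding farthest_point_sampling_def by (simp add: atLeast0AtMost)
lemma lam0: "lam 0 = \<infinity>" using fps unfolding farthest_point_sampling_def by simp
lemma pP: "k \<le> n \<Longrightarrow> p k \<in> P" using bij bij_betw_apply by fastforce
lemma pM: "k \<le> n \<Longrightarrow> p k \<in> M" using pP PM by auto
lemma phile: assumes "k \<le> n" shows "phi k \<le> n"
proof (cases "k = 0")
  case True then show ?thesis using phi0 by simp
next
  case False then have "k \<in> {1..n}" using assms by auto
  then have "phi k < k" using ch by blast
  then show ?thesis using assms by simp
qed
lemma philt: "1 \<le> k \<Longrightarrow> k \<le> n \<Longrightarrow> phi k < k" using ch by auto
lemma cpos: "(eps + 1) / eps > 0" using eps by simp
lemma C0: "Cf eps lam 0 = \<infinity>" using eps lam0 by (simp add: Cf_def)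
lemma Cmono: "k \<le> n \<Longrightarrow> Cf eps lam k \<le> Cf eps lam (phi k)"
proof (cases "k = 0")
  case True then show ?thesis using phi0 by simp
next
  case False
  assume k: "k \<le> n"
  then have h: "ereal (d (p k) (p (phi k))) + Cf eps lam k \<le> Cf eps lam (phi k)"
    using ch False by (auto simp: Cf_def)
  have "Cf eps lam k \<le> ereal (d (p k) (p (phi k))) + Cf eps lam k"
    by (rule add_increasing) (use Metric_space.nonneg[OF ms] in auto)
  then show ?thesis using h by simp
qed

lemma dom:
  assumes w: "w \<in> M" and k: "k \<le> n" and lt: "ereal (d (p k) w) < Cf eps lam k"
  shows "ereal (d (p (phi k)) w) < Cf eps lam (phi k)"
proof (cases "k = 0")
  case True then show ?thesis using phi0 lt by simp
next
  case False
  have h: "ereal (d (p k) (p (phi k))) + Cf eps lam k \<le> Cf eps lam (phi k)"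
    using ch False k by (auto simp: Cf_def)
  have tri: "d (p (phi k)) w \<le> d (p k) (p (phi k)) + d (p k) w"
    using Metric_space.triangle[OF ms, of "p (phi k)" "p k" w] Metric_space.commute[OF ms, of "p (phi k)" "p k"]
      pM phile k w by auto
  have "ereal (d (p (phi k)) w) \<le> ereal (d (p k) (p (phi k))) + ereal (d (p k) w)"
    using tri by simp
  also have "\<dots> < ereal (d (p k) (p (phi k))) + Cf eps lam k"
    by (rule ereal_less_add) (use lt in auto)
  finally show ?thesis using h by simp
qed

lemma net_exists:
  assumes k: "k \<le> n" and nr: "\<not> r \<le> lam k"
  shows "\<exists>i\<le>n. r \<le> lam i \<and> ereal (d (p k) (p i)) < r"
proof -
  define m where "m = (LEAST j. \<not> r \<le> lam j)"
  have mk: "m \<le> k" unfolding m_def using nr by (rule Least_le)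
  have nm: "\<not> r \<le> lam m" unfolding m_def using nr by (rule LeastI)
  have m0: "m \<noteq> 0"
  proof
    assume "m = 0" then show False using nm lam0 by simp
  qed
  have below: "r \<le> lam j" if "j < m" for j using not_less_Least[of j] that unfolding m_def by blast
  have m1: "m \<in> {1..n}" using m0 mk k by auto
  have F: "lam m = ereal (Min ((\<lambda>i. d (p m) (p i)) ` {..<m}))"
     and G: "\<forall>q\<in>P. Min ((\<lambda>i. d q (p i)) ` {..<m}) \<le> Min ((\<lambda>i. d (p m) (p i)) ` {..<m})"
    using fps m1 unfolding farthest_point_sampling_def by blast+
  have ne: "(\<lambda>i. d (p k) (p i)) ` {..<m} \<noteq> {}" using m0 by auto
  obtain i where i: "i < m" "d (p k) (p i) = Min ((\<lambda>i. d (p k) (p i)) ` {..<m})"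
    using Min_in[OF _ ne] by auto
  have "ereal (d (p k) (p i)) \<le> lam m" using G pP[OF k] i F by auto
  also have "\<dots> < r" using nm by simp
  finally have "ereal (d (p k) (p i)) < r" .
  moreover have "i \<le> n" using i mk k by simp
  moreover have "r \<le> lam i" using below i by simp
  ultimately show ?thesis by blast
qed

lemma main:
  "\<forall>t::ereal. 0 \<le> t \<longrightarrow>
    (\<exists>f. continuous_on (geom_real (cech_level M d P t)) f \<and>
         f ` geom_real (cech_level M d P t)
           \<subseteq> geom_real (sparse_level M d n p lam phi eps (ereal (1 + eps) * t)) \<and>
         homotopic_with_canon (\<lambda>_. True)
           (geom_real (sparse_level M d n p lam phi eps t))
           (geom_real (sparse_level M d n p lam phi eps (ereal (1 + eps) * t))) f id \<and>
         homotopic_with_canon (\<lambda>_. True)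
           (geom_real (cech_level M d P t))
           (geom_real (cech_level M d P (ereal (1 + eps) * t))) f id)"
proof (intro allI impI)
  fix t :: ereal assume t0: "0 \<le> t"
  define T where "T = ereal (1 + eps) * t"
  define r where "r = ereal eps * t"
  define C where "C = Cf eps lam"
  define net where "net k = (if r \<le> lam k then k else SOME i. i \<le> n \<and> r \<le> lam i \<and> ereal (d (p k) (p i)) < r)" for k
  have tT: "t \<le> T" unfolding T_def using t0 eps
    by (cases t) (auto simp: algebra_simps)
  have cr: "ereal ((eps + 1) / eps) * r = T"
  proof -
    have "ereal ((eps + 1) / eps) * r = ereal ((eps + 1) / eps * eps) * t"
      unfolding r_def by (simp add: mult.assoc[symmetric])
    also have "(eps + 1) / eps * eps = 1 + eps" using eps by (simp add: field_simps)
    finally show ?thesis unfolding T_def by simp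
  qed
  have rT: "T \<le> C i" if "r \<le> lam i" for i
  proof -
    have "ereal ((eps + 1) / eps) * r \<le> ereal ((eps + 1) / eps) * lam i"
      by (rule ereal_mult_left_mono) (use that cpos in auto)
    then show ?thesis using cr by (simp add: C_def Cf_def)
  qed
  have addT: "ereal (x + y) < T" if "ereal x < t" "ereal y < r" for x y
  proof (cases t)
    case (real t')
    then show ?thesis using that unfolding T_def r_def by (simp add: algebra_simps)
  next
    case PInf then show ?thesis unfolding T_def using eps by simp
  next
    case MInf then show ?thesis using t0 by simp
  qed
  have netp: "net k \<le> n \<and> T \<le> C (net k) \<and> (\<forall>w\<in>M. ereal (d (p k) w) < t \<longrightarrow> ereal (d (p (net k)) w) < T)"
    if k: "k \<le> n" for k
  proof (cases "r \<le> lam k")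
    case True then show ?thesis using k rT tT by (auto simp: net_def)
  next
    case False
    let ?Q = "\<lambda>i. i \<le> n \<and> r \<le> lam i \<and> ereal (d (p k) (p i)) < r"
    have ex: "\<exists>i. ?Q i" using net_exists[OF k False] by blast
    have Q: "?Q (net k)" unfolding net_def using False someI_ex[OF ex] by simp
    have "ereal (d (p (net k)) w) < T" if w: "w \<in> M" and lt: "ereal (d (p k) w) < t" for w
    proof -
      have tri: "d (p (net k)) w \<le> d (p k) (p (net k)) + d (p k) w"
        using Metric_space.triangle[OF ms, of "p (net k)" "p k" w] Metric_space.commute[OF ms, of "p (net k)" "p k"]
          pM Q k w by auto
      have "ereal (d (p k) w + d (p k) (p (net k))) < T" using addT[OF lt] Q by auto
      moreover have "ereal (d (p (net k)) w) \<le> ereal (d (p k) w + d (p k) (p (net k)))"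
        using tri by (simp add: algebra_simps)
      ultimately show ?thesis by (meson order.strict_trans1)
    qed
    then show ?thesis using Q rT by auto
  qed

  define iv where "iv u = inv_into {..n} p u" for u
  define Gm where "Gm \<pi> u = p (\<pi> (iv u))" for \<pi> :: "nat \<Rightarrow> nat" and u
  have Pim: "p ` {..n} = P" using bij by (simp add: bij_betw_def)
  have ivp: "iv u \<le> n \<and> p (iv u) = u" if "u \<in> P" for u
    using that bij unfolding iv_def
    by (metis Pim atMost_iff bij_betw_def f_inv_into_f inv_into_into)
  have pinj: "k = l" if "k \<le> n" "l \<le> n" "p k = p l" for k l
    using bij that unfolding bij_betw_def inj_on_def by auto
  have Gim: "Gm \<pi> ` \<sigma> = p ` \<pi> ` iv ` \<sigma>" for \<pi> \<sigma> unfolding Gm_def by auto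
  have ivs: "iv ` \<sigma> \<subseteq> {..n}" if "\<sigma> \<subseteq> P" for \<sigma> using ivp that by auto
  have memJ: "k \<in> J" if "J \<subseteq> {..n}" "k \<le> n" "p k \<in> p ` J" for k J
    using pinj that by auto
  have sp_in: "p ` J \<in> sparse_level M d n p lam phi eps s"
    if J: "J \<subseteq> {..n}" and w: "w \<in> M"
      and H: "\<forall>a\<in>J. \<forall>b\<in>J. ereal (d (p a) w) < min s (min (C a) (C (phi b)))" for J w s
    unfolding sparse_level_def
  proof (intro CollectI conjI bexI[OF _ w] allI impI)
    show "p ` J \<subseteq> p ` {0..n}" using J by (auto simp: atLeast0AtMost)
  next
    fix k l assume "k \<le> n \<and> l \<le> n \<and> p k \<in> p ` J \<and> p l \<in> p ` J"
    then have "k \<in> J" "l \<in> J" using memJ J by auto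
    then show "ereal (d (p k) w) < min s (min (ereal ((eps + 1) / eps) * lam k)
                                       (ereal ((eps + 1) / eps) * lam (phi l)))"
      using H by (auto simp: C_def Cf_def)
  qed
  have sp_out: "\<sigma> \<subseteq> P \<and> (\<exists>w\<in>M. \<forall>a\<in>iv`\<sigma>. \<forall>b\<in>iv`\<sigma>. ereal (d (p a) w) < min s (min (C a) (C (phi b))))"
    if sig: "\<sigma> \<in> sparse_level M d n p lam phi eps s" for \<sigma> s
  proof -
    have sP: "\<sigma> \<subseteq> P" using sig Pim unfolding sparse_level_def by (auto simp: atLeast0AtMost)
    obtain w where w: "w \<in> M" and H: "\<forall>k l. k \<le> n \<and> l \<le> n \<and> p k \<in> \<sigma> \<and> p l \<in> \<sigma> \<longrightarrow>
        ereal (d (p k) w) < min s (min (ereal ((eps + 1) / eps) * lam k) (ereal ((eps + 1) / eps) * lam (phi l)))"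
      using sig unfolding sparse_level_def by blast
    have "\<forall>a\<in>iv`\<sigma>. \<forall>b\<in>iv`\<sigma>. ereal (d (p a) w) < min s (min (C a) (C (phi b)))"
    proof (intro ballI)
      fix a b assume a: "a \<in> iv`\<sigma>" and b: "b \<in> iv`\<sigma>"
      then have "a \<le> n \<and> p a \<in> \<sigma>" "b \<le> n \<and> p b \<in> \<sigma>" using ivp sP by auto
      then show "ereal (d (p a) w) < min s (min (C a) (C (phi b)))"
        using H unfolding C_def Cf_def by blast
    qed
    then show ?thesis using sP w by blast
  qed
  have ce_in: "p ` J \<in> cech_level M d P s"
    if J: "J \<subseteq> {..n}" and w: "w \<in> M" and H: "\<forall>a\<in>J. ereal (d (p a) w) < s" for J w s
    unfolding cech_level_def
  proof (intro CollectI conjI bexI[OF _ w])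
    show "p ` J \<subseteq> P" using J Pim by auto
    show "finite (p ` J)" using J finite_subset by blast
    show "\<forall>q\<in>p ` J. ereal (d q w) < s" using H by auto
  qed
  have ce_out: "\<sigma> \<subseteq> P \<and> (\<exists>w\<in>M. \<forall>a\<in>iv`\<sigma>. ereal (d (p a) w) < s)"
    if sig: "\<sigma> \<in> cech_level M d P s" for \<sigma> s
  proof -
    have sP: "\<sigma> \<subseteq> P" using sig unfolding cech_level_def by auto
    obtain w where w: "w \<in> M" and H: "\<forall>q\<in>\<sigma>. ereal (d q w) < s" using sig unfolding cech_level_def by blast
    have "\<forall>a\<in>iv`\<sigma>. ereal (d (p a) w) < s"
    proof
      fix a assume "a \<in> iv`\<sigma>"
      then have "p a \<in> \<sigma>" using ivp sP by auto
      then show "ereal (d (p a) w) < s" using H by blast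
    qed
    then show ?thesis using sP w by blast
  qed
  define KS where "KS = sparse_level M d n p lam phi eps t"
  define LS where "LS = sparse_level M d n p lam phi eps T"
  define KC where "KC = cech_level M d P t"
  define LC where "LC = cech_level M d P T"
  have KSP: "\<forall>\<sigma>\<in>KS. \<sigma> \<subseteq> P" using sp_out KS_def by blast
  have KCP: "\<forall>\<sigma>\<in>KC. \<sigma> \<subseteq> P" using ce_out KC_def by blast
  have idS: "push P (Gm (\<lambda>j. j)) x = x" if "x \<in> geom_real KS" for x
  proof -
    have "push P (Gm (\<lambda>j. j)) = push P (\<lambda>u. u)" by (rule push_cong) (use ivp in \<open>auto simp: Gm_def\<close>)
    then show ?thesis using push_id_eq[OF fP KSP that] by simp
  qed
  have idC: "push P (Gm (\<lambda>j. j)) x = x" if "x \<in> geom_real KC" for x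
  proof -
    have "push P (Gm (\<lambda>j. j)) = push P (\<lambda>u. u)" by (rule push_cong) (use ivp in \<open>auto simp: Gm_def\<close>)
    then show ?thesis using push_id_eq[OF fP KCP that] by simp
  qed
  define f where "f = push P (Gm net)"
  have netS: "p ` net ` J \<in> LS \<and> p ` (net ` J \<union> J) \<in> LC"
    if J: "J \<subseteq> {..n}" and w: "w \<in> M" and H: "\<forall>a\<in>J. ereal (d (p a) w) < t" for J w
  proof
    have N: "\<And>k. k \<in> J \<Longrightarrow> net k \<le> n \<and> T \<le> C (net k) \<and> ereal (d (p (net k)) w) < T"
      using netp J H w by blast
    have Cm: "\<And>k. k \<in> J \<Longrightarrow> C (net k) \<le> C (phi (net k))" using Cmono N unfolding C_def by blast
    show "p ` net ` J \<in> LS" unfolding LS_def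
    proof (rule sp_in[OF _ w])
      show "net ` J \<subseteq> {..n}" using N by auto
      show "\<forall>a\<in>net ` J. \<forall>b\<in>net ` J. ereal (d (p a) w) < min T (min (C a) (C (phi b)))"
      proof (intro ballI)
        fix a b assume "a \<in> net ` J" "b \<in> net ` J"
        then obtain k l where kl: "k \<in> J" "l \<in> J" "a = net k" "b = net l" by blast
        have 1: "ereal (d (p a) w) < T" using N kl by blast
        have 2: "T \<le> C a" using N kl by blast
        have 3: "T \<le> C (phi b)" using N[OF kl(2)] Cm[OF kl(2)] kl by auto
        show "ereal (d (p a) w) < min T (min (C a) (C (phi b)))"
          using 1 2 3 by (simp add: order.strict_trans2)
      qed
    qed
    show "p ` (net ` J \<union> J) \<in> LC" unfolding LC_def
    proof (rule ce_in[OF _ w])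
      show "net ` J \<union> J \<subseteq> {..n}" using N J by auto
      show "\<forall>a\<in>net ` J \<union> J. ereal (d (p a) w) < T"
      proof
        fix a assume "a \<in> net ` J \<union> J"
        then show "ereal (d (p a) w) < T"
        proof
          assume "a \<in> net ` J" then show ?thesis using N by blast
        next
          assume "a \<in> J" then show ?thesis using H tT by (meson order.strict_trans2)
        qed
      qed
    qed
  qed
  have cont: "continuous_on (geom_real KC) f" unfolding f_def by (rule push_cont[OF fP])
  have img: "f ` geom_real KC \<subseteq> geom_real LS" unfolding f_def
  proof (rule push_into[OF fP KCP])
    show "\<forall>\<sigma>\<in>KC. Gm net ` \<sigma> \<in> LS"
    proof
      fix \<sigma> assume "\<sigma> \<in> KC"
      then obtain w where "\<sigma> \<subseteq> P" "w \<in> M" "\<forall>a\<in>iv`\<sigma>. ereal (d (p a) w) < t" using ce_out KC_def by blast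
      then show "Gm net ` \<sigma> \<in> LS" using netS[of "iv ` \<sigma>" w] ivs Gim by auto
    qed
  qed
  have homC: "homotopic_with_canon (\<lambda>_. True) (geom_real KC) (geom_real LC) f id"
  proof -
    have "homotopic_with_canon (\<lambda>_. True) (geom_real KC) (geom_real LC) (push P (Gm net)) (push P (Gm (\<lambda>j. j)))"
    proof (rule contig[OF fP KCP])
      show "\<forall>\<sigma>\<in>KC. Gm net ` \<sigma> \<union> Gm (\<lambda>j. j) ` \<sigma> \<in> LC"
      proof
        fix \<sigma> assume "\<sigma> \<in> KC"
        then obtain w where "\<sigma> \<subseteq> P" "w \<in> M" "\<forall>a\<in>iv`\<sigma>. ereal (d (p a) w) < t" using ce_out KC_def by blast
        moreover have "Gm net ` \<sigma> \<union> Gm (\<lambda>j. j) ` \<sigma> = p ` (net ` iv ` \<sigma> \<union> iv ` \<sigma>)" using Gim by auto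
        ultimately show "Gm net ` \<sigma> \<union> Gm (\<lambda>j. j) ` \<sigma> \<in> LC" using netS[of "iv ` \<sigma>" w] ivs by auto
      qed
    qed
    then show ?thesis unfolding f_def
      by (rule homotopic_with_eq) (auto simp: idC)
  qed
  obtain L where L: "set L = {..n}" "sorted_wrt (\<lambda>a b. key C phi n a < key C phi n b) L"
    using sorted_exists[OF finite_atMost key_inj] by blast
  have chs: "chainsys C phi n (\<lambda>k. ereal (d (p k) w))" if w: "w \<in> M" for w
  proof
    show "\<And>k. k \<le> n \<Longrightarrow> C k \<le> C (phi k)" using Cmono unfolding C_def by blast
    show "\<And>k. k \<le> n \<Longrightarrow> phi k \<le> n" using phile by blast
    show "\<And>k. 1 \<le> k \<Longrightarrow> k \<le> n \<Longrightarrow> phi k < k" using philt by blast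
    show "phi 0 = 0" by (rule phi0)
    show "C 0 = \<infinity>" using C0 unfolding C_def .
    show "\<And>k. k \<le> n \<Longrightarrow> ereal (d (p k) w) < C k \<Longrightarrow> ereal (d (p (phi k)) w) < C (phi k)"
      using dom[OF w] unfolding C_def by blast
  qed
  define Q where "Q \<sigma> w \<longleftrightarrow> (\<forall>a\<in>iv`\<sigma>. ereal (d (p a) w) < t) \<and> (\<forall>xs ys. L = xs @ ys \<longrightarrow>
      cinv C phi T n (\<lambda>k. ereal (d (p k) w)) (set xs) (gfun C phi T xs ` iv`\<sigma>) \<and>
      (\<forall>xs' v. xs = xs' @ [v] \<longrightarrow> cinv C phi T n (\<lambda>k. ereal (d (p k) w)) {} (gfun C phi T xs' ` iv`\<sigma> \<union> gfun C phi T xs ` iv`\<sigma>)))" for \<sigma> w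
  have SF: "\<exists>w\<in>M. Q \<sigma> w"
    if sig: "\<sigma> \<in> KS" for \<sigma>
  proof -
    obtain w where sP: "\<sigma> \<subseteq> P" and w: "w \<in> M"
      and H: "\<forall>a\<in>iv`\<sigma>. \<forall>b\<in>iv`\<sigma>. ereal (d (p a) w) < min t (min (C a) (C (phi b)))"
      using sp_out sig KS_def by blast
    interpret cs: chainsys C phi n T "\<lambda>k. ereal (d (p k) w)" using chs[OF w] .
    have H2: "\<forall>a\<in>iv`\<sigma>. \<forall>b\<in>iv`\<sigma>. ereal (d (p a) w) < min T (min (C a) (C (phi b)))"
    proof (intro ballI)
      fix a b assume "a \<in> iv`\<sigma>" "b \<in> iv`\<sigma>"
      then have "ereal (d (p a) w) < min t (min (C a) (C (phi b)))" using H by blast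
      then show "ereal (d (p a) w) < min T (min (C a) (C (phi b)))"
        using tT by (metis min_less_iff_conj order.strict_trans2)
    qed
    have I0: "cinv C phi T n (\<lambda>k. ereal (d (p k) w)) {} (iv`\<sigma>)"
      unfolding cinv_def using ivs[OF sP] H2 by blast
    have "\<forall>xs ys. L = xs @ ys \<longrightarrow>
      cinv C phi T n (\<lambda>k. ereal (d (p k) w)) (set xs) (gfun C phi T xs ` iv`\<sigma>) \<and>
      (\<forall>xs' v. xs = xs' @ [v] \<longrightarrow> cinv C phi T n (\<lambda>k. ereal (d (p k) w)) {} (gfun C phi T xs' ` iv`\<sigma> \<union> gfun C phi T xs ` iv`\<sigma>))"
      using cs.chain_inv[OF L I0] by blast
    moreover have "\<forall>a\<in>iv`\<sigma>. ereal (d (p a) w) < t"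
    proof
      fix a assume "a \<in> iv`\<sigma>"
      then have "ereal (d (p a) w) < min t (min (C a) (C (phi a)))" using H by blast
      then show "ereal (d (p a) w) < t" by simp
    qed
    ultimately have "Q \<sigma> w" unfolding Q_def by blast
    then show ?thesis using w by blast
  qed
  have hpre: "homotopic_with_canon (\<lambda>_. True) (geom_real KS) (geom_real LS)
      (push P (Gm (\<lambda>j. j))) (push P (Gm (gfun C phi T xs)))" if "L = xs @ ys" for xs ys
    using that
  proof (induction xs arbitrary: ys rule: rev_induct)
    case Nil
    show ?case unfolding gfun_Nil
    proof (rule contig[OF fP KSP])
      show "\<forall>\<sigma>\<in>KS. Gm (\<lambda>j. j) ` \<sigma> \<union> Gm (\<lambda>j. j) ` \<sigma> \<in> LS"
      proof
        fix \<sigma> assume "\<sigma> \<in> KS"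
        from SF[OF this] obtain w where w: "w \<in> M" and Qw: "Q \<sigma> w" by blast
        have "cinv C phi T n (\<lambda>k. ereal (d (p k) w)) (set []) (gfun C phi T [] ` iv`\<sigma>)"
          using conjunct2[OF Qw[unfolded Q_def], rule_format, of "[]" L] by simp
        then have "cinv C phi T n (\<lambda>k. ereal (d (p k) w)) {} (iv`\<sigma>)"
          by (simp add: gfun_Nil)
        then have "p ` iv ` \<sigma> \<in> LS" unfolding LS_def cinv_def by (intro sp_in[OF _ w]) auto
        moreover have "Gm (\<lambda>j. j) ` \<sigma> \<union> Gm (\<lambda>j. j) ` \<sigma> = p ` iv ` \<sigma>" using Gim[of "\<lambda>j. j" \<sigma>] by simp
        ultimately show "Gm (\<lambda>j. j) ` \<sigma> \<union> Gm (\<lambda>j. j) ` \<sigma> \<in> LS" by simp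
      qed
    qed
  next
    case (snoc v xs)
    have IH: "homotopic_with_canon (\<lambda>_. True) (geom_real KS) (geom_real LS)
      (push P (Gm (\<lambda>j. j))) (push P (Gm (gfun C phi T xs)))"
    proof -
      have "L = xs @ (v # ys)" using snoc.prems by simp
      then show ?thesis by (rule snoc.IH)
    qed
    have st: "homotopic_with_canon (\<lambda>_. True) (geom_real KS) (geom_real LS)
      (push P (Gm (gfun C phi T xs))) (push P (Gm (gfun C phi T (xs @ [v]))))"
    proof (rule contig[OF fP KSP])
      show "\<forall>\<sigma>\<in>KS. Gm (gfun C phi T xs) ` \<sigma> \<union> Gm (gfun C phi T (xs @ [v])) ` \<sigma> \<in> LS"
      proof
        fix \<sigma> assume "\<sigma> \<in> KS"
        from SF[OF this] obtain w where w: "w \<in> M" and Qw: "Q \<sigma> w" by blast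
        have X: "\<forall>xs' va. xs @ [v] = xs' @ [va] \<longrightarrow> cinv C phi T n (\<lambda>k. ereal (d (p k) w)) {} (gfun C phi T xs' ` iv`\<sigma> \<union> gfun C phi T (xs @ [v]) ` iv`\<sigma>)"
          using conjunct2[OF Qw[unfolded Q_def], rule_format, of "xs @ [v]" ys] snoc.prems by simp
        have "cinv C phi T n (\<lambda>k. ereal (d (p k) w)) {} (gfun C phi T xs ` iv`\<sigma> \<union> gfun C phi T (xs @ [v]) ` iv`\<sigma>)"
          using X by blast
        then have "p ` (gfun C phi T xs ` iv`\<sigma> \<union> gfun C phi T (xs @ [v]) ` iv`\<sigma>) \<in> LS"
          unfolding LS_def cinv_def by (intro sp_in[OF _ w]) auto
        moreover have "Gm (gfun C phi T xs) ` \<sigma> \<union> Gm (gfun C phi T (xs @ [v])) ` \<sigma>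
            = p ` (gfun C phi T xs ` iv`\<sigma> \<union> gfun C phi T (xs @ [v]) ` iv`\<sigma>)" using Gim by (simp add: image_Un)
        ultimately show "Gm (gfun C phi T xs) ` \<sigma> \<union> Gm (gfun C phi T (xs @ [v])) ` \<sigma> \<in> LS" by simp
      qed
    qed
    show ?case by (rule homotopic_with_trans[OF IH st])
  qed
  have hfin: "homotopic_with_canon (\<lambda>_. True) (geom_real KS) (geom_real LS)
      (push P (Gm (gfun C phi T L))) (push P (Gm net))"
  proof (rule contig[OF fP KSP])
    show "\<forall>\<sigma>\<in>KS. Gm (gfun C phi T L) ` \<sigma> \<union> Gm net ` \<sigma> \<in> LS"
    proof
      fix \<sigma> assume sig: "\<sigma> \<in> KS"
      have sP: "\<sigma> \<subseteq> P" using KSP sig by blast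
      from SF[OF sig] obtain w where w: "w \<in> M" and Qw: "Q \<sigma> w" by blast
      have Ht: "\<forall>a\<in>iv`\<sigma>. ereal (d (p a) w) < t" using Qw unfolding Q_def by blast
      define \<tau> where "\<tau> = gfun C phi T L ` iv`\<sigma>"
      have ci: "cinv C phi T n (\<lambda>k. ereal (d (p k) w)) (set L) \<tau>"
        using conjunct2[OF Qw[unfolded Q_def], rule_format, of L "[]"] unfolding \<tau>_def by simp
      have \<tau>n: "\<tau> \<subseteq> {..n}" and I2: "\<And>a b. a\<in>\<tau> \<Longrightarrow> b\<in>\<tau> \<Longrightarrow> ereal (d (p a) w) < min T (min (C a) (C (phi b)))"
        and I3: "\<And>a. a \<in> \<tau> \<Longrightarrow> T \<le> C (phi a)"
        using ci L(1) unfolding cinv_def by blast+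
      have N: "\<And>k. k \<in> iv`\<sigma> \<Longrightarrow> net k \<le> n \<and> T \<le> C (net k) \<and> ereal (d (p (net k)) w) < T"
        using netp ivs[OF sP] Ht w by blast
      have Cm: "\<And>k. k \<in> iv`\<sigma> \<Longrightarrow> T \<le> C (phi (net k))"
        using Cmono N unfolding C_def by (meson order.trans)
      have "p ` (\<tau> \<union> net ` iv`\<sigma>) \<in> LS" unfolding LS_def
      proof (rule sp_in[OF _ w])
        show "\<tau> \<union> net ` iv ` \<sigma> \<subseteq> {..n}" using \<tau>n N by auto
        show "\<forall>a\<in>\<tau> \<union> net ` iv ` \<sigma>. \<forall>b\<in>\<tau> \<union> net ` iv ` \<sigma>. ereal (d (p a) w) < min T (min (C a) (C (phi b)))"
        proof (intro ballI)
          fix a b assume a: "a \<in> \<tau> \<union> net ` iv ` \<sigma>" and b: "b \<in> \<tau> \<union> net ` iv ` \<sigma>"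
          have Tb: "T \<le> C (phi b)" using b I3 Cm by blast
          have Da: "ereal (d (p a) w) < T \<and> ereal (d (p a) w) < C a"
          proof (cases "a \<in> \<tau>")
            case True then show ?thesis using I2[OF True True] by simp
          next
            case False then obtain k where "k \<in> iv`\<sigma>" "a = net k" using a by blast
            then show ?thesis using N by (meson order.strict_trans2)
          qed
          show "ereal (d (p a) w) < min T (min (C a) (C (phi b)))"
            using Da Tb order.strict_trans2[of "ereal (d (p a) w)" T "C (phi b)"] by simp
        qed
      qed
      moreover have "Gm (gfun C phi T L) ` \<sigma> \<union> Gm net ` \<sigma> = p ` (\<tau> \<union> net ` iv`\<sigma>)"
        using Gim \<tau>_def by (simp add: image_Un)
      ultimately show "Gm (gfun C phi T L) ` \<sigma> \<union> Gm net ` \<sigma> \<in> LS" by simp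
    qed
  qed
  have homS: "homotopic_with_canon (\<lambda>_. True) (geom_real KS) (geom_real LS) f id"
  proof -
    have "homotopic_with_canon (\<lambda>_. True) (geom_real KS) (geom_real LS) (push P (Gm (\<lambda>j. j))) (push P (Gm net))"
      by (rule homotopic_with_trans[OF hpre[of L "[]"] hfin]) simp
    then have "homotopic_with_canon (\<lambda>_. True) (geom_real KS) (geom_real LS) (push P (Gm net)) (push P (Gm (\<lambda>j. j)))"
      by (rule homotopic_with_symD)
    then show ?thesis unfolding f_def
      by (rule homotopic_with_eq) (auto simp: idS)
  qed
  show "\<exists>f. continuous_on (geom_real (cech_level M d P t)) f \<and>
         f ` geom_real (cech_level M d P t)
           \<subseteq> geom_real (sparse_level M d n p lam phi eps (ereal (1 + eps) * t)) \<and>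
         homotopic_with_canon (\<lambda>_. True)
           (geom_real (sparse_level M d n p lam phi eps t))
           (geom_real (sparse_level M d n p lam phi eps (ereal (1 + eps) * t))) f id \<and>
         homotopic_with_canon (\<lambda>_. True)
           (geom_real (cech_level M d P t))
           (geom_real (cech_level M d P (ereal (1 + eps) * t))) f id"
    using cont img homS homC unfolding KS_def LS_def KC_def LC_def T_def by blast
qed

end

theorem theorem1p1:
  fixes M :: "'m set" and d :: "'m \<Rightarrow> 'm \<Rightarrow> real" and P :: "'m set"
    and n :: nat and p :: "nat \<Rightarrow> 'm" and lam :: "nat \<Rightarrow> ereal"
    and eps :: real and phi :: "nat \<Rightarrow> nat"
  assumes "Metric_space M d"
    and "P \<subseteq> M" and "finite P"
    and "farthest_point_sampling d P n p lam"
    and "eps > 0"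
    and "phi 0 = 0"
    and "\<forall>k\<in>{1..n}. phi k < k \<and>
           ereal (d (p k) (p (phi k))) + ereal ((eps + 1) / eps) * lam k
             \<le> ereal ((eps + 1) / eps) * lam (phi k)"
  shows "\<forall>t::ereal. 0 \<le> t \<longrightarrow>
    (\<exists>f. continuous_on (geom_real (cech_level M d P t)) f \<and>
         f ` geom_real (cech_level M d P t)
           \<subseteq> geom_real (sparse_level M d n p lam phi eps (ereal (1 + eps) * t)) \<and>
         homotopic_with_canon (\<lambda>_. True)
           (geom_real (sparse_level M d n p lam phi eps t))
           (geom_real (sparse_level M d n p lam phi eps (ereal (1 + eps) * t))) f id \<and>
         homotopic_with_canon (\<lambda>_. True)
           (geom_real (cech_level M d P t))
           (geom_real (cech_level M d P (ereal (1 + eps) * t))) f id)"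
  using main[OF assms] .

end
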